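(* Let $D$ be a square-free integer and let $\mathbb{Z}[\sqrt{D}]$ denote the ring of integers of $\mathbb{Q}(\sqrt{D})$. Let $A\in\mathbb{M}_2(\mathbb{Z}[\sqrt{D}])$ be a singular matrix. If $A$ is similar (via an invertible matrix in $\mathbb{M}_2(\mathbb{Z}[\sqrt{D}])$) to a matrix having at least one row or column whose entries generate a principal ideal of $\mathbb{Z}[\sqrt{D}]$, then $A$ is a column--row matrix.
   Context: A matrix $M\in\mathbb{M}_2(R)$ is called column--row if there exist $a,b,c,d\in R$ such that $M=\begin{pmatrix} a&0\\ b&0\end{pmatrix}\begin{pmatrix} c&d\\ 0&0\end{pmatrix}$. $\mathbb{Z}[\sqrt{D}]=\{a+b\sqrt{D}:a,b\in\mathbb{Z}\}$ if $D\equiv 2,3 \pmod 4$ and $\{\frac{a+b\sqrt{D}}{2}:a\equiv b \pmod 2\}$ if $D\equiv 1\pmod 4$. *)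

theory Defs
  imports "HOL-Analysis.Analysis" "HOL-Computational_Algebra.Squarefree"
begin

definition sqrtD :: "int \<Rightarrow> complex" where
  "sqrtD D = (if D \<ge> 0 then complex_of_real (sqrt (of_int D))
              else \<i> * complex_of_real (sqrt (of_int (- D))))"

definition quad_int_ring :: "int \<Rightarrow> complex set" where
  "quad_int_ring D =
     (if D mod 4 = 1
      then {(of_int a + of_int b * sqrtD D) / 2 | a b. a mod 2 = b mod 2}
      else {of_int a + of_int b * sqrtD D | a b. True})"

definition in_mat :: "complex set \<Rightarrow> complex^2^2 \<Rightarrow> bool" where
  "in_mat R A = (\<forall>i j. A $ i $ j \<in> R)"

definition invertible_over :: "complex set \<Rightarrow> complex^2^2 \<Rightarrow> complex^2^2 \<Rightarrow> bool" where
  "invertible_over R P Q = (in_mat R P \<and> in_mat R Q \<and> P ** Q = mat 1 \<and> Q ** P = mat 1)"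

definition ideal_gen2 :: "complex set \<Rightarrow> complex \<Rightarrow> complex \<Rightarrow> complex set" where
  "ideal_gen2 R x y = {r * x + s * y | r s. r \<in> R \<and> s \<in> R}"

definition principal_ideal_in :: "complex set \<Rightarrow> complex set \<Rightarrow> bool" where
  "principal_ideal_in R I = (\<exists>g\<in>R. I = {r * g | r. r \<in> R})"

definition has_principal_line :: "complex set \<Rightarrow> complex^2^2 \<Rightarrow> bool" where
  "has_principal_line R B =
     ((\<exists>i. principal_ideal_in R (ideal_gen2 R (B $ i $ 1) (B $ i $ 2))) \<or>
      (\<exists>j. principal_ideal_in R (ideal_gen2 R (B $ 1 $ j) (B $ 2 $ j))))"

definition mat2 :: "complex \<Rightarrow> complex \<Rightarrow> complex \<Rightarrow> complex \<Rightarrow> complex^2^2" where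
  "mat2 a b c d = (\<chi> i j. if i = 1 then (if j = 1 then a else b) else (if j = 1 then c else d))"

definition column_row :: "complex set \<Rightarrow> complex^2^2 \<Rightarrow> bool" where
  "column_row R M = (\<exists>a\<in>R. \<exists>b\<in>R. \<exists>c\<in>R. \<exists>d\<in>R. M = mat2 a 0 b 0 ** mat2 c d 0 0)"

end

theory Submission
  imports Defs
begin

lemma sqrtD_sq: "sqrtD D * sqrtD D = of_int D"
proof (cases "D \<ge> 0")
  case True
  have "sqrt (of_int D) * sqrt (of_int D) = (of_int D::real)" using True by simp
  then have "complex_of_real (sqrt (of_int D)) * complex_of_real (sqrt (of_int D))
        = complex_of_real (of_int D)" by (metis of_real_mult)
  then show ?thesis using True by (simp add: sqrtD_def)
next
  case False
  have "sqrt (of_int (- D)) * sqrt (of_int (- D)) = (of_int (-D)::real)" using False by simp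
  then have h: "complex_of_real (sqrt (of_int (- D))) * complex_of_real (sqrt (of_int (- D)))
        = complex_of_real (of_int (-D))" by (metis of_real_mult)
  have "(\<i> * complex_of_real (sqrt (of_int (- D)))) * (\<i> * complex_of_real (sqrt (of_int (- D))))
        = - (complex_of_real (sqrt (of_int (- D))) * complex_of_real (sqrt (of_int (- D))))"
    by (simp add: algebra_simps)
  also have "\<dots> = of_int D" unfolding h by simp
  finally show ?thesis using False by (simp add: sqrtD_def)
qed

lemma qr1_char:
  assumes "D mod 4 = 1"
  shows "x \<in> quad_int_ring D \<longleftrightarrow> (\<exists>b k. x = (of_int (b + 2*k) + of_int b * sqrtD D) / 2)"
proof
  assume "x \<in> quad_int_ring D"
  then obtain a b where ab: "x = (of_int a + of_int b * sqrtD D) / 2" "a mod 2 = b mod 2"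
    using assms unfolding quad_int_ring_def by auto
  have "\<exists>k. a = b + 2*k" using ab(2) by presburger
  then obtain k where "a = b + 2*k" by blast
  then show "\<exists>b k. x = (of_int (b + 2*k) + of_int b * sqrtD D) / 2" using ab by blast
next
  assume "\<exists>b k. x = (of_int (b + 2*k) + of_int b * sqrtD D) / 2"
  then obtain b k where "x = (of_int (b + 2*k) + of_int b * sqrtD D) / 2" by blast
  moreover have "(b + 2*k) mod 2 = b mod 2" by simp
  ultimately have "x \<in> {(of_int a + of_int b * sqrtD D) / 2 |a b. a mod 2 = b mod 2}" by blast
  then show "x \<in> quad_int_ring D" using assms unfolding quad_int_ring_def by simp
qed

lemma qr0_char:
  assumes "D mod 4 \<noteq> 1"
  shows "x \<in> quad_int_ring D \<longleftrightarrow> (\<exists>a b. x = of_int a + of_int b * sqrtD D)"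
  using assms unfolding quad_int_ring_def by auto

lemma qr_one: "1 \<in> quad_int_ring D"
proof (cases "D mod 4 = 1")
  case True
  have "(1::complex) = (of_int (0 + 2*1) + of_int 0 * sqrtD D) / 2" by simp
  then show ?thesis using qr1_char[OF True] by blast
next
  case False
  have "(1::complex) = of_int 1 + of_int 0 * sqrtD D" by simp
  then show ?thesis using qr0_char[OF False] by blast
qed

lemma qr_zero: "0 \<in> quad_int_ring D"
proof (cases "D mod 4 = 1")
  case True
  have "(0::complex) = (of_int (0 + 2*0) + of_int 0 * sqrtD D) / 2" by simp
  then show ?thesis using qr1_char[OF True] by blast
next
  case False
  have "(0::complex) = of_int 0 + of_int 0 * sqrtD D" by simp
  then show ?thesis using qr0_char[OF False] by blast
qed

lemma qr_add:
  assumes "x \<in> quad_int_ring D" "y \<in> quad_int_ring D"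
  shows "x + y \<in> quad_int_ring D"
proof (cases "D mod 4 = 1")
  case True
  obtain b k where x: "x = (of_int (b + 2*k) + of_int b * sqrtD D) / 2"
    using assms(1) qr1_char[OF True] by blast
  obtain d m where y: "y = (of_int (d + 2*m) + of_int d * sqrtD D) / 2"
    using assms(2) qr1_char[OF True] by blast
  have "x + y = (of_int ((b+d) + 2*(k+m)) + of_int (b+d) * sqrtD D) / 2"
    unfolding x y by (simp add: field_simps)
  then show ?thesis using qr1_char[OF True] by blast
next
  case False
  obtain a b where x: "x = of_int a + of_int b * sqrtD D"
    using assms(1) qr0_char[OF False] by blast
  obtain c d where y: "y = of_int c + of_int d * sqrtD D"
    using assms(2) qr0_char[OF False] by blast
  have "x + y = of_int (a+c) + of_int (b+d) * sqrtD D"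
    unfolding x y by (simp add: field_simps)
  then show ?thesis using qr0_char[OF False] by blast
qed

lemma qr_mult:
  assumes "x \<in> quad_int_ring D" "y \<in> quad_int_ring D"
  shows "x * y \<in> quad_int_ring D"
proof (cases "D mod 4 = 1")
  case True
  obtain b k where x: "x = (of_int (b + 2*k) + of_int b * sqrtD D) / 2"
    using assms(1) qr1_char[OF True] by blast
  obtain d m where y: "y = (of_int (d + 2*m) + of_int d * sqrtD D) / 2"
    using assms(2) qr1_char[OF True] by blast
  have "\<exists>n. D = 1 + 4*n" using True by presburger
  then obtain n where n: "D = 1 + 4*n" by blast
  define B where "B = b*d + k*d + b*m"
  define K where "K = k*m + b*d*n"
  have "x * y = (of_int (B + 2*K) + of_int B * sqrtD D) / 2"
  proof -
    have "x * y = (of_int (b + 2*k) * of_int (d + 2*m) + of_int b * of_int d * (sqrtD D * sqrtD D)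
        + (of_int (b + 2*k) * of_int d + of_int b * of_int (d + 2*m)) * sqrtD D) / 4"
      unfolding x y by (simp add: field_simps)
    also have "\<dots> = (of_int ((b + 2*k) * (d + 2*m) + b * d * D)
        + of_int ((b + 2*k) * d + b * (d + 2*m)) * sqrtD D) / 4"
      by (simp add: sqrtD_sq)
    also have "(b + 2*k) * (d + 2*m) + b * d * D = 2 * (B + 2*K)"
      unfolding B_def K_def n by (simp add: algebra_simps)
    also have "(b + 2*k) * d + b * (d + 2*m) = 2 * B"
      unfolding B_def by (simp add: algebra_simps)
    also have "(of_int (2 * (B + 2*K)) + of_int (2 * B) * sqrtD D) / 4
       = (of_int (B + 2*K) + of_int B * sqrtD D) / (2::complex)" by (simp add: field_simps)
    finally show ?thesis .
  qed
  then show ?thesis using qr1_char[OF True] by blast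
next
  case False
  obtain a b where x: "x = of_int a + of_int b * sqrtD D"
    using assms(1) qr0_char[OF False] by blast
  obtain c d where y: "y = of_int c + of_int d * sqrtD D"
    using assms(2) qr0_char[OF False] by blast
  have "x * y = of_int a * of_int c + of_int b * of_int d * (sqrtD D * sqrtD D)
      + (of_int a * of_int d + of_int b * of_int c) * sqrtD D"
    unfolding x y by (simp add: algebra_simps)
  also have "\<dots> = of_int (a*c + b*d*D) + of_int (a*d + b*c) * sqrtD D"
    by (simp add: sqrtD_sq)
  finally show ?thesis using qr0_char[OF False] by blast
qed


lemma ex_2: "(\<exists>i::2. P i) \<longleftrightarrow> P 1 \<or> P 2"
  by (metis exhaust_2)

locale subr =
  fixes R :: "complex set"
  assumes z: "0 \<in> R" and o: "1 \<in> R"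
    and ad: "\<And>x y. x \<in> R \<Longrightarrow> y \<in> R \<Longrightarrow> x + y \<in> R"
    and mu: "\<And>x y. x \<in> R \<Longrightarrow> y \<in> R \<Longrightarrow> x * y \<in> R"
begin

lemma key:
  assumes R: "x \<in> R" "y \<in> R" "z \<in> R" "w \<in> R"
    and det: "x*w - y*z = 0"
    and pr: "principal_ideal_in R (ideal_gen2 R x y)"
  shows "\<exists>g\<in>R. \<exists>t\<in>R. \<exists>a\<in>R. \<exists>b\<in>R. x = g*a \<and> y = g*b \<and> z = t*a \<and> w = t*b"
proof -
  obtain g where g: "g \<in> R" "ideal_gen2 R x y = {r * g | r. r \<in> R}"
    using pr unfolding principal_ideal_in_def by blast
  have "x \<in> ideal_gen2 R x y" unfolding ideal_gen2_def using z o by force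
  then obtain a where a: "a \<in> R" "x = a * g" using g(2) by auto
  have "y \<in> ideal_gen2 R x y" unfolding ideal_gen2_def using z o by force
  then obtain b where b: "b \<in> R" "y = b * g" using g(2) by auto
  have "g \<in> ideal_gen2 R x y" using g(2) o by force
  then obtain r s where rs: "r \<in> R" "s \<in> R" "g = r * x + s * y"
    unfolding ideal_gen2_def by blast
  show ?thesis
  proof (cases "g = 0")
    case True
    then have "x = 0" "y = 0" using a b by auto
    then show ?thesis using z o R by force
  next
    case False
    have "g * 1 = g * (r*a + s*b)" using rs(3) a(2) b(2) by (simp add: algebra_simps)
    then have one: "r*a + s*b = 1" using False by (metis mult_left_cancel)
    have "g * (a*w - b*z) = 0" using det a(2) b(2) by (simp add: algebra_simps)
    then have awbz: "a*w = b*z" using False by simp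
    define t where "t = r*z + s*w"
    have tR: "t \<in> R" unfolding t_def using rs R by (simp add: ad mu)
    have "z = z * (r*a + s*b)" using one by simp
    also have "\<dots> = r*z*a + s*(a*w)" using awbz by (simp add: algebra_simps)
    also have "\<dots> = t * a" unfolding t_def by (simp add: algebra_simps)
    finally have zt: "z = t*a" .
    have "w = w * (r*a + s*b)" using one by simp
    also have "\<dots> = r*(b*z) + s*w*b" using awbz[symmetric] by (simp add: algebra_simps)
    also have "\<dots> = t * b" unfolding t_def by (simp add: algebra_simps)
    finally have wt: "w = t*b" .
    have "x = g*a" "y = g*b" using a b by (simp_all add: mult.commute)
    then show ?thesis using g(1) tR a(1) b(1) zt wt by blast
  qed
qed

lemma mk_cr:
  assumes "a \<in> R" "b \<in> R" "c \<in> R" "d \<in> R"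
    and "M$1$1 = a*c" "M$1$2 = a*d" "M$2$1 = b*c" "M$2$2 = b*d"
  shows "column_row R M"
proof -
  have "M = mat2 a 0 b 0 ** mat2 c d 0 0"
    unfolding vec_eq_iff using assms(5-8)
    by (auto simp: matrix_matrix_mult_def sum_2 mat2_def forall_2)
  then show ?thesis unfolding column_row_def using assms(1-4) by blast
qed

lemma in_mat_mult:
  assumes "in_mat R A" "in_mat R B" shows "in_mat R (A ** B)"
  using assms unfolding in_mat_def by (auto simp: matrix_matrix_mult_def sum_2 ad mu)

lemma cr_transfer:
  assumes "column_row R B" "in_mat R Q" "in_mat R P"
  shows "column_row R (Q ** B ** P)"
proof -
  obtain a b c d where abcd: "a \<in> R" "b \<in> R" "c \<in> R" "d \<in> R"
    "B = mat2 a 0 b 0 ** mat2 c d 0 0"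
    using assms(1) unfolding column_row_def by blast
  have "Q ** B ** P = (Q ** mat2 a 0 b 0) ** (mat2 c d 0 0 ** P)"
    using abcd(5) by (simp add: matrix_mul_assoc)
  also have "Q ** mat2 a 0 b 0 = mat2 (Q$1$1*a + Q$1$2*b) 0 (Q$2$1*a + Q$2$2*b) 0"
    unfolding vec_eq_iff by (auto simp: matrix_matrix_mult_def sum_2 mat2_def forall_2)
  also have "mat2 c d 0 0 ** P = mat2 (c*P$1$1 + d*P$2$1) (c*P$1$2 + d*P$2$2) 0 0"
    unfolding vec_eq_iff by (auto simp: matrix_matrix_mult_def sum_2 mat2_def forall_2)
  finally have e: "Q ** B ** P = mat2 (Q$1$1*a + Q$1$2*b) 0 (Q$2$1*a + Q$2$2*b) 0 **
      mat2 (c*P$1$1 + d*P$2$1) (c*P$1$2 + d*P$2$2) 0 0" .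
  have m: "Q$1$1*a + Q$1$2*b \<in> R" "Q$2$1*a + Q$2$2*b \<in> R"
    "c*P$1$1 + d*P$2$1 \<in> R" "c*P$1$2 + d*P$2$2 \<in> R"
    using abcd(1-4) assms(2,3) unfolding in_mat_def by (simp_all add: ad mu)
  show ?thesis unfolding column_row_def e using m by blast
qed

lemma singular_principal:
  assumes "in_mat R B" "det B = 0" "has_principal_line R B"
  shows "column_row R B"
proof -
  define x y z w where "x = B$1$1" "y = B$1$2" "z = B$2$1" "w = B$2$2"
  have R: "x \<in> R" "y \<in> R" "z \<in> R" "w \<in> R"
    using assms(1) unfolding in_mat_def x_y_z_w_def by auto
  have d: "x*w - y*z = 0" using assms(2) unfolding det_2 x_y_z_w_def .
  from assms(3) consider (r1) "principal_ideal_in R (ideal_gen2 R x y)"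
    | (r2) "principal_ideal_in R (ideal_gen2 R z w)"
    | (c1) "principal_ideal_in R (ideal_gen2 R x z)"
    | (c2) "principal_ideal_in R (ideal_gen2 R y w)"
    unfolding has_principal_line_def x_y_z_w_def by (auto simp: ex_2)
  then show ?thesis
  proof cases
    case r1
    from key[OF R d this] obtain g t a b where "g \<in> R" "t \<in> R" "a \<in> R" "b \<in> R"
      "x = g*a" "y = g*b" "z = t*a" "w = t*b" by blast
    then show ?thesis using mk_cr[of g t a b B] unfolding x_y_z_w_def by blast
  next
    case r2
    have d': "z*y - w*x = 0" using d by (simp add: algebra_simps)
    from key[OF R(3,4,1,2) d' r2] obtain g t a b where "g \<in> R" "t \<in> R" "a \<in> R" "b \<in> R"
      "z = g*a" "w = g*b" "x = t*a" "y = t*b" by blast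
    then show ?thesis using mk_cr[of t g a b B] unfolding x_y_z_w_def by blast
  next
    case c1
    have d': "x*w - z*y = 0" using d by (simp add: algebra_simps)
    from key[OF R(1,3,2,4) d' c1] obtain g t a b where "g \<in> R" "t \<in> R" "a \<in> R" "b \<in> R"
      "x = g*a" "z = g*b" "y = t*a" "w = t*b" by blast
    then show ?thesis using mk_cr[of a b g t B] unfolding x_y_z_w_def by (simp add: mult.commute)
  next
    case c2
    have d': "y*z - w*x = 0" using d by (simp add: algebra_simps)
    from key[OF R(2,4,1,3) d' c2] obtain g t a b where "g \<in> R" "t \<in> R" "a \<in> R" "b \<in> R"
      "y = g*a" "w = g*b" "x = t*a" "z = t*b" by blast
    then show ?thesis using mk_cr[of a b t g B] unfolding x_y_z_w_def by (simp add: mult.commute)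
  qed
qed

theorem main:
  assumes "in_mat R A" "det A = 0"
    and "\<exists>P Q. invertible_over R P Q \<and> has_principal_line R (P ** A ** Q)"
  shows "column_row R A"
proof -
  obtain P Q where PQ: "invertible_over R P Q" "has_principal_line R (P ** A ** Q)"
    using assms(3) by blast
  have inv: "in_mat R P" "in_mat R Q" "P ** Q = mat 1" "Q ** P = mat 1"
    using PQ(1) unfolding invertible_over_def by auto
  define B where "B = P ** A ** Q"
  have BR: "in_mat R B" unfolding B_def using inv assms(1) by (simp add: in_mat_mult)
  have dB: "det B = 0" unfolding B_def using assms(2) by (simp add: det_mul)
  have "column_row R B" using singular_principal[OF BR dB] PQ(2) B_def by simp
  then have "column_row R (Q ** B ** P)" using cr_transfer inv by blast
  also have "Q ** B ** P = A" unfolding B_def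
    by (metis inv(4) matrix_mul_assoc matrix_mul_lid matrix_mul_rid)
  finally show ?thesis .
qed

end

interpretation qr: subr "quad_int_ring D"
  by unfold_locales (auto intro: qr_zero qr_one qr_add qr_mult)

theorem proposition2p5:
  fixes D :: int and A :: "complex^2^2"
  assumes "squarefree D"
    and "in_mat (quad_int_ring D) A"
    and "det A = 0"
    and "\<exists>P Q. invertible_over (quad_int_ring D) P Q \<and>
               has_principal_line (quad_int_ring D) (P ** A ** Q)"
  shows "column_row (quad_int_ring D) A"
  using qr.main assms(2-4) by blast

end
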